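(* Let $\lambda$ be a generalized EW-labeling of a finite graded poset $P$ with $\hat0$. Then for every $k$ there is a label-preserving bijection from the set of saturated chains of length $k$ in $Q_\lambda(P)$ starting at its minimum $[\hat0]$ (labeled by $\lambda^*$) to the set of saturated chains of length $k$ in $P$ starting at $\hat0$ (labeled by $\lambda$). In particular there is a label-preserving bijection $\mathcal M_{Q_\lambda(P)}\to\mathcal M_P$ between maximal chains.
   Context: An E-labeling is a map $\lambda$ from the cover relations of $P$ to a poset $\Lambda$; words of labels of saturated chains are read bottom to top; a chain is increasing if its word is strictly increasing and ascent-free if no two consecutive labels $a,b$ satisfy $a<b$. ER-labeling: every closed interval has exactly one increasing maximal chain. Rank two switching property: for every saturated chain $\hat0=x_0\lessdot\cdots\lessdot x_k$ and $i$ with $\lambda(x_{i-1}\lessdot x_i)<\lambda(x_i\lessdot x_{i+1})$ there is a unique $x_i'$ with $x_{i-1}\lessdot x_i'\lessdot x_{i+1}$ whose two labels are those of $x_{i-1}\lessdot x_i\lessdot x_{i+1}$ swapped. Quadratic exchange $U_i$ replaces $x_i$ by $x_i'$ at an ascent at position $i$ (identity otherwise); $\mathbf c_1\sim_\lambda\mathbf c_2$ for maximal chains of an interval means they are connected by such exchanges (forwards or backwards). A generalized EW-labeling is an ER-labeling with the rank two switching property satisfying the braid relation ($U_iU_{i+1}U_i(\mathbf c)=U_{i+1}U_iU_{i+1}(\mathbf c)$ whenever $\mathbf c$ has strictly increasing labels at positions $i,i+1,i+2$) and the cancellative property (for $z<x<y$, $\mathbf c$ a maximal chain of $[z,x]$,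 $\mathbf c_1,\mathbf c_2$ maximal chains of $[x,y]$: $\mathbf c\cup\mathbf c_1\sim_\lambda\mathbf c\cup\mathbf c_2$ implies $\mathbf c_1\sim_\lambda\mathbf c_2$). $Q_\lambda(P)$: $C(P)$ is the set of saturated chains starting at $\hat0$, ordered by inclusion; $e(\mathbf c)$ its top element; $\mathbf c_1\sim\mathbf c_2$ iff $e(\mathbf c_1)=e(\mathbf c_2)=y$ and $\mathbf c_1\sim_\lambda\mathbf c_2$ in $[\hat0,y]$. $Q_\lambda(P)$ is the set of classes, ordered by the transitive closure of: $X\le Y$ if some $\mathbf c\in X$, $\mathbf d\in Y$ have $\mathbf c\subseteq\mathbf d$. Chains in a class $X$ share a multiset of labels $S(X)$, and $\lambda^*(X\lessdot Y)=S(Y)\setminus S(X)$ (a single label). *)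

theory Defs
  imports Main "HOL-Library.Multiset"
begin

definition pstrict :: "('a \<Rightarrow> 'a \<Rightarrow> bool) \<Rightarrow> 'a \<Rightarrow> 'a \<Rightarrow> bool" where
  "pstrict le x y \<longleftrightarrow> le x y \<and> x \<noteq> y"

definition is_poset :: "'a set \<Rightarrow> ('a \<Rightarrow> 'a \<Rightarrow> bool) \<Rightarrow> bool" where
  "is_poset A le \<longleftrightarrow> (\<forall>x\<in>A. le x x) \<and>
     (\<forall>x\<in>A. \<forall>y\<in>A. le x y \<and> le y x \<longrightarrow> x = y) \<and>
     (\<forall>x\<in>A. \<forall>y\<in>A. \<forall>w\<in>A. le x y \<and> le y w \<longrightarrow> le x w)"

definition is_bottom :: "'a set \<Rightarrow> ('a \<Rightarrow> 'a \<Rightarrow> bool) \<Rightarrow> 'a \<Rightarrow> bool" where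
  "is_bottom A le z \<longleftrightarrow> z \<in> A \<and> (\<forall>x\<in>A. le z x)"

definition covers :: "'a set \<Rightarrow> ('a \<Rightarrow> 'a \<Rightarrow> bool) \<Rightarrow> 'a \<Rightarrow> 'a \<Rightarrow> bool" where
  "covers A le x y \<longleftrightarrow> x \<in> A \<and> y \<in> A \<and> pstrict le x y \<and>
     \<not> (\<exists>w\<in>A. pstrict le x w \<and> pstrict le w y)"

text \<open>Saturated chain x_0 covered-by x_1 ... x_k, as a nonempty list; its length is k.\<close>
definition sat_chain :: "'a set \<Rightarrow> ('a \<Rightarrow> 'a \<Rightarrow> bool) \<Rightarrow> 'a list \<Rightarrow> bool" where
  "sat_chain A le xs \<longleftrightarrow> xs \<noteq> [] \<and> set xs \<subseteq> A \<and>
     (\<forall>i. Suc i < length xs \<longrightarrow> covers A le (xs ! i) (xs ! Suc i))"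

definition sat_chains_from :: "'a set \<Rightarrow> ('a \<Rightarrow> 'a \<Rightarrow> bool) \<Rightarrow> 'a \<Rightarrow> nat \<Rightarrow> 'a list set" where
  "sat_chains_from A le z k = {xs. sat_chain A le xs \<and> hd xs = z \<and> length xs = Suc k}"

definition is_chain :: "'a set \<Rightarrow> ('a \<Rightarrow> 'a \<Rightarrow> bool) \<Rightarrow> 'a set \<Rightarrow> bool" where
  "is_chain A le C \<longleftrightarrow> C \<subseteq> A \<and> (\<forall>x\<in>C. \<forall>y\<in>C. le x y \<or> le y x)"

definition maximal_chain :: "'a set \<Rightarrow> ('a \<Rightarrow> 'a \<Rightarrow> bool) \<Rightarrow> 'a list \<Rightarrow> bool" where
  "maximal_chain A le xs \<longleftrightarrow> sorted_wrt (pstrict le) xs \<and> is_chain A le (set xs) \<and>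
     (\<forall>C. is_chain A le C \<and> set xs \<subseteq> C \<longrightarrow> C = set xs)"

definition graded :: "'a set \<Rightarrow> ('a \<Rightarrow> 'a \<Rightarrow> bool) \<Rightarrow> bool" where
  "graded A le \<longleftrightarrow> (\<forall>xs ys. maximal_chain A le xs \<and> maximal_chain A le ys \<longrightarrow> length xs = length ys)"

definition interval :: "'a set \<Rightarrow> ('a \<Rightarrow> 'a \<Rightarrow> bool) \<Rightarrow> 'a \<Rightarrow> 'a \<Rightarrow> 'a set" where
  "interval A le x y = {w \<in> A. le x w \<and> le w y}"

definition mchains :: "'a set \<Rightarrow> ('a \<Rightarrow> 'a \<Rightarrow> bool) \<Rightarrow> 'a \<Rightarrow> 'a \<Rightarrow> 'a list set" where
  "mchains A le x y = {xs. maximal_chain (interval A le x y) le xs}"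

definition word :: "('a \<Rightarrow> 'a \<Rightarrow> 'l) \<Rightarrow> 'a list \<Rightarrow> 'l list" where
  "word lam xs = map (\<lambda>i. lam (xs ! i) (xs ! Suc i)) [0..<length xs - 1]"

definition increasing :: "'l::order list \<Rightarrow> bool" where
  "increasing w \<longleftrightarrow> (\<forall>i. Suc i < length w \<longrightarrow> w ! i < w ! Suc i)"

definition is_ER :: "'a set \<Rightarrow> ('a \<Rightarrow> 'a \<Rightarrow> bool) \<Rightarrow> ('a \<Rightarrow> 'a \<Rightarrow> 'l::order) \<Rightarrow> bool" where
  "is_ER A le lam \<longleftrightarrow> (\<forall>x\<in>A. \<forall>y\<in>A. le x y \<longrightarrow>
     (\<exists>!xs. xs \<in> mchains A le x y \<and> increasing (word lam xs)))"

definition rank_two_switching ::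
  "'a set \<Rightarrow> ('a \<Rightarrow> 'a \<Rightarrow> bool) \<Rightarrow> 'a \<Rightarrow> ('a \<Rightarrow> 'a \<Rightarrow> 'l::order) \<Rightarrow> bool" where
  "rank_two_switching A le z lam \<longleftrightarrow> (\<forall>xs i. sat_chain A le xs \<and> hd xs = z \<and> 0 < i \<and> Suc i < length xs
       \<and> lam (xs ! (i - 1)) (xs ! i) < lam (xs ! i) (xs ! Suc i) \<longrightarrow>
     (\<exists>!x'. covers A le (xs ! (i - 1)) x' \<and> covers A le x' (xs ! Suc i) \<and>
            lam (xs ! (i - 1)) x' = lam (xs ! i) (xs ! Suc i) \<and>
            lam x' (xs ! Suc i) = lam (xs ! (i - 1)) (xs ! i)))"

definition switch_elem ::
  "'a set \<Rightarrow> ('a \<Rightarrow> 'a \<Rightarrow> bool) \<Rightarrow> ('a \<Rightarrow> 'a \<Rightarrow> 'l) \<Rightarrow> 'a \<Rightarrow> 'a \<Rightarrow> 'a \<Rightarrow> 'a" where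
  "switch_elem A le lam a b c = (THE x'. covers A le a x' \<and> covers A le x' c \<and>
       lam a x' = lam b c \<and> lam x' c = lam a b)"

text \<open>Quadratic exchange U_i (element index i, 0-based list positions, x_0 = head).\<close>
definition qexch ::
  "'a set \<Rightarrow> ('a \<Rightarrow> 'a \<Rightarrow> bool) \<Rightarrow> ('a \<Rightarrow> 'a \<Rightarrow> 'l::order) \<Rightarrow> nat \<Rightarrow> 'a list \<Rightarrow> 'a list" where
  "qexch A le lam i xs = (if 0 < i \<and> Suc i < length xs \<and> lam (xs ! (i - 1)) (xs ! i) < lam (xs ! i) (xs ! Suc i)
      then xs[i := switch_elem A le lam (xs ! (i - 1)) (xs ! i) (xs ! Suc i)] else xs)"

definition braid_rel :: "'a set \<Rightarrow> ('a \<Rightarrow> 'a \<Rightarrow> bool) \<Rightarrow> ('a \<Rightarrow> 'a \<Rightarrow> 'l::order) \<Rightarrow> bool" where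
  "braid_rel A le lam \<longleftrightarrow> (\<forall>xs i. sat_chain A le xs \<and> 0 < i \<and> i + 2 < length xs \<and>
       lam (xs ! (i - 1)) (xs ! i) < lam (xs ! i) (xs ! (i + 1)) \<and>
       lam (xs ! i) (xs ! (i + 1)) < lam (xs ! (i + 1)) (xs ! (i + 2)) \<longrightarrow>
     qexch A le lam i (qexch A le lam (i + 1) (qexch A le lam i xs)) =
     qexch A le lam (i + 1) (qexch A le lam i (qexch A le lam (i + 1) xs)))"

definition exch_rel ::
  "'a set \<Rightarrow> ('a \<Rightarrow> 'a \<Rightarrow> bool) \<Rightarrow> ('a \<Rightarrow> 'a \<Rightarrow> 'l::order) \<Rightarrow> 'a \<Rightarrow> 'a \<Rightarrow> ('a list \<times> 'a list) set" where
  "exch_rel A le lam x y = {(c, qexch A le lam i c) | c i. c \<in> mchains A le x y}"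

definition lsim ::
  "'a set \<Rightarrow> ('a \<Rightarrow> 'a \<Rightarrow> bool) \<Rightarrow> ('a \<Rightarrow> 'a \<Rightarrow> 'l::order) \<Rightarrow> 'a \<Rightarrow> 'a \<Rightarrow> 'a list \<Rightarrow> 'a list \<Rightarrow> bool" where
  "lsim A le lam x y c d \<longleftrightarrow> c \<in> mchains A le x y \<and> d \<in> mchains A le x y \<and>
     (c, d) \<in> (exch_rel A le lam x y \<union> (exch_rel A le lam x y)\<inverse>)\<^sup>*"

definition cancellative :: "'a set \<Rightarrow> ('a \<Rightarrow> 'a \<Rightarrow> bool) \<Rightarrow> ('a \<Rightarrow> 'a \<Rightarrow> 'l::order) \<Rightarrow> bool" where
  "cancellative A le lam \<longleftrightarrow> (\<forall>z x y c c1 c2. z \<in> A \<and> x \<in> A \<and> y \<in> A \<and>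
       pstrict le z x \<and> pstrict le x y \<and>
       c \<in> mchains A le z x \<and> c1 \<in> mchains A le x y \<and> c2 \<in> mchains A le x y \<and>
       lsim A le lam z y (c @ tl c1) (c @ tl c2) \<longrightarrow> lsim A le lam x y c1 c2)"

definition gen_EW :: "'a set \<Rightarrow> ('a \<Rightarrow> 'a \<Rightarrow> bool) \<Rightarrow> 'a \<Rightarrow> ('a \<Rightarrow> 'a \<Rightarrow> 'l::order) \<Rightarrow> bool" where
  "gen_EW A le z lam \<longleftrightarrow> is_ER A le lam \<and> rank_two_switching A le z lam \<and>
     braid_rel A le lam \<and> cancellative A le lam"

definition Cset :: "'a set \<Rightarrow> ('a \<Rightarrow> 'a \<Rightarrow> bool) \<Rightarrow> 'a \<Rightarrow> 'a list set" where
  "Cset A le z = {xs. sat_chain A le xs \<and> hd xs = z}"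

definition chain_equiv ::
  "'a set \<Rightarrow> ('a \<Rightarrow> 'a \<Rightarrow> bool) \<Rightarrow> 'a \<Rightarrow> ('a \<Rightarrow> 'a \<Rightarrow> 'l::order) \<Rightarrow> 'a list \<Rightarrow> 'a list \<Rightarrow> bool" where
  "chain_equiv A le z lam c d \<longleftrightarrow> c \<in> Cset A le z \<and> d \<in> Cset A le z \<and> last c = last d \<and>
     lsim A le lam z (last c) c d"

definition Q_carrier ::
  "'a set \<Rightarrow> ('a \<Rightarrow> 'a \<Rightarrow> bool) \<Rightarrow> 'a \<Rightarrow> ('a \<Rightarrow> 'a \<Rightarrow> 'l::order) \<Rightarrow> 'a list set set" where
  "Q_carrier A le z lam = {{d. chain_equiv A le z lam c d} | c. c \<in> Cset A le z}"

definition Q_base ::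
  "'a set \<Rightarrow> ('a \<Rightarrow> 'a \<Rightarrow> bool) \<Rightarrow> 'a \<Rightarrow> ('a \<Rightarrow> 'a \<Rightarrow> 'l::order) \<Rightarrow> ('a list set \<times> 'a list set) set" where
  "Q_base A le z lam = {(X, Y). X \<in> Q_carrier A le z lam \<and> Y \<in> Q_carrier A le z lam \<and>
     (\<exists>c\<in>X. \<exists>d\<in>Y. set c \<subseteq> set d)}"

definition Q_le ::
  "'a set \<Rightarrow> ('a \<Rightarrow> 'a \<Rightarrow> bool) \<Rightarrow> 'a \<Rightarrow> ('a \<Rightarrow> 'a \<Rightarrow> 'l::order) \<Rightarrow> 'a list set \<Rightarrow> 'a list set \<Rightarrow> bool" where
  "Q_le A le z lam X Y \<longleftrightarrow> (X, Y) \<in> (Q_base A le z lam)\<^sup>+"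

definition Q_bottom ::
  "'a set \<Rightarrow> ('a \<Rightarrow> 'a \<Rightarrow> bool) \<Rightarrow> 'a \<Rightarrow> ('a \<Rightarrow> 'a \<Rightarrow> 'l::order) \<Rightarrow> 'a list set" where
  "Q_bottom A le z lam = {d. chain_equiv A le z lam [z] d}"

text \<open>S(X): common multiset of labels of the chains in the class X.\<close>
definition label_mset :: "('a \<Rightarrow> 'a \<Rightarrow> 'l) \<Rightarrow> 'a list set \<Rightarrow> 'l multiset" where
  "label_mset lam X = mset (word lam (SOME c. c \<in> X))"

definition Q_label :: "('a \<Rightarrow> 'a \<Rightarrow> 'l) \<Rightarrow> 'a list set \<Rightarrow> 'a list set \<Rightarrow> 'l" where
  "Q_label lam X Y = (THE l. label_mset lam Y - label_mset lam X = {#l#})"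

end

theory Submission
  imports Defs
begin


lemma poset_refl: "is_poset B le \<Longrightarrow> x \<in> B \<Longrightarrow> le x x"
  unfolding is_poset_def by (elim conjE) blast
lemma poset_antisym: "is_poset B le \<Longrightarrow> x \<in> B \<Longrightarrow> y \<in> B \<Longrightarrow> le x y \<Longrightarrow> le y x \<Longrightarrow> x = y"
  unfolding is_poset_def by (elim conjE) blast
lemma poset_trans: "is_poset B le \<Longrightarrow> x \<in> B \<Longrightarrow> y \<in> B \<Longrightarrow> w \<in> B \<Longrightarrow> le x y \<Longrightarrow> le y w \<Longrightarrow> le x w"
  unfolding is_poset_def by (elim conjE) blast

lemma sat_chain_nth: "sat_chain B le xs \<Longrightarrow> i < length xs \<Longrightarrow> xs ! i \<in> B"
  unfolding sat_chain_def by auto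

lemma sat_chain_cov: "sat_chain B le xs \<Longrightarrow> Suc i < length xs \<Longrightarrow> covers B le (xs ! i) (xs ! Suc i)"
  unfolding sat_chain_def by auto

lemma sat_chain_le:
  assumes P: "is_poset B le" and S: "sat_chain B le xs" and ij: "i \<le> j" "j < length xs"
  shows "le (xs ! i) (xs ! j)"
  using ij
proof (induction j)
  case 0 then show ?case using P S by (simp add: poset_refl sat_chain_nth)
next
  case (Suc j)
  show ?case
  proof (cases "i = Suc j")
    case True then show ?thesis using P S Suc by (simp add: poset_refl sat_chain_nth)
  next
    case False
    then have "le (xs ! i) (xs ! j)" using Suc by auto
    moreover have "le (xs ! j) (xs ! Suc j)" using sat_chain_cov[OF S Suc(3)]
      by (simp add: covers_def pstrict_def)
    moreover have "xs ! i \<in> B" "xs ! j \<in> B" "xs ! Suc j \<in> B"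
      using S Suc.prems by (auto intro!: sat_chain_nth)
    ultimately show ?thesis using poset_trans[OF P] by blast
  qed
qed

lemma sat_chain_lt:
  assumes P: "is_poset B le" and S: "sat_chain B le xs" and ij: "i < j" "j < length xs"
  shows "pstrict le (xs ! i) (xs ! j)"
proof -
  have c: "covers B le (xs ! i) (xs ! Suc i)" using sat_chain_cov[OF S] ij by auto
  have 1: "le (xs ! i) (xs ! j)" using sat_chain_le[OF P S] ij by auto
  have 2: "le (xs ! Suc i) (xs ! j)" using sat_chain_le[OF P S] ij by auto
  have "xs ! i \<noteq> xs ! j"
  proof
    assume e: "xs ! i = xs ! j"
    have "le (xs ! i) (xs ! Suc i)" using c by (simp add: covers_def pstrict_def)
    then have "xs ! i = xs ! Suc i" using poset_antisym[OF P] 2 e sat_chain_nth[OF S] ij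
      by (metis Suc_lessI dual_order.strict_trans order.strict_trans1 less_imp_le_nat le_neq_implies_less)
    then show False using c by (simp add: covers_def pstrict_def)
  qed
  then show ?thesis using 1 by (simp add: pstrict_def)
qed

lemma sat_chain_sorted:
  assumes P: "is_poset B le" and S: "sat_chain B le xs"
  shows "sorted_wrt (pstrict le) xs"
  using sat_chain_lt[OF P S] by (simp add: sorted_wrt_iff_nth_less)

lemma sorted_le:
  assumes P: "is_poset B le" and s: "sorted_wrt (pstrict le) xs" and sub: "set xs \<subseteq> B"
    and ij: "i \<le> j" "j < length xs"
  shows "le (xs ! i) (xs ! j)"
proof (cases "i = j")
  case True then show ?thesis using P sub ij by (simp add: poset_refl subset_iff)
next
  case False then show ?thesis using s ij by (simp add: sorted_wrt_iff_nth_less pstrict_def)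
qed




lemma maxchain_insert:
  assumes M: "maximal_chain B le xs" and P: "is_poset B le" and w: "w \<in> B"
    and cmp: "\<forall>x\<in>set xs. le x w \<or> le w x"
  shows "w \<in> set xs"
proof -
  have ch: "is_chain B le (set xs)" using M by (simp add: maximal_chain_def)
  have "is_chain B le (insert w (set xs))"
    using ch w cmp poset_refl[OF P w] unfolding is_chain_def by blast
  then have "insert w (set xs) = set xs" using M unfolding maximal_chain_def by blast
  then show ?thesis by blast
qed

lemma max_chain_imp:
  assumes P: "is_poset B le" and b: "is_bottom B le b" and M: "maximal_chain B le xs"
  shows "sat_chain B le xs \<and> hd xs = b \<and> (\<forall>w\<in>B. \<not> pstrict le (last xs) w)"
proof -
  have s: "sorted_wrt (pstrict le) xs" and ch: "is_chain B le (set xs)"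
    using M by (auto simp: maximal_chain_def)
  have sub: "set xs \<subseteq> B" using ch by (simp add: is_chain_def)
  have bB: "b \<in> B" and bl: "\<forall>x\<in>B. le b x" using b by (auto simp: is_bottom_def)
  have ble: "le (xs ! i) (xs ! j)" if "i \<le> j" "j < length xs" for i j
    using sorted_le[OF P s sub] that by blast
  have nth: "xs ! i \<in> B" if "i < length xs" for i using sub that by auto
  have "b \<in> set xs"
    using maxchain_insert[OF M P bB] bl sub by blast
  then obtain m where m: "m < length xs" "xs ! m = b" by (auto simp: in_set_conv_nth)
  have ne: "xs \<noteq> []" using m by auto
  have m0: "m = 0"
  proof (rule ccontr)
    assume "m \<noteq> 0"
    then have "pstrict le (xs ! 0) (xs ! m)" using s m by (auto simp: sorted_wrt_iff_nth_less)
    moreover have "le b (xs ! 0)" using bl nth ne by auto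
    ultimately show False using poset_antisym[OF P] m nth ne by (metis pstrict_def length_greater_0_conv)
  qed
  have hd: "hd xs = b" using m m0 ne by (simp add: hd_conv_nth)
  have lastn: "last xs = xs ! (length xs - 1)" using ne by (simp add: last_conv_nth)
  have lmax: "\<forall>w\<in>B. \<not> pstrict le (last xs) w"
  proof (intro ballI notI)
    fix w assume wB: "w \<in> B" and pw: "pstrict le (last xs) w"
    have "\<forall>x\<in>set xs. le x w \<or> le w x"
    proof
      fix x assume "x \<in> set xs"
      then obtain i where i: "i < length xs" "x = xs ! i" by (auto simp: in_set_conv_nth)
      have "le x (last xs)" using ble[of i "length xs - 1"] i lastn by auto
      then show "le x w \<or> le w x" using pw poset_trans[OF P] nth i wB lastn ne
        by (metis pstrict_def last_in_set sub subsetD)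
    qed
    then have "w \<in> set xs" using maxchain_insert[OF M P wB] by blast
    then obtain j where j: "j < length xs" "w = xs ! j" by (auto simp: in_set_conv_nth)
    have "le w (last xs)" using ble[of j "length xs - 1"] j lastn by auto
    then show False using pw poset_antisym[OF P] wB sub ne
      by (metis pstrict_def last_in_set subsetD)
  qed
  have cov: "covers B le (xs ! i) (xs ! Suc i)" if i: "Suc i < length xs" for i
  proof -
    have ps: "pstrict le (xs ! i) (xs ! Suc i)" using s i by (simp add: sorted_wrt_iff_nth_less)
    have "\<not> (\<exists>w\<in>B. pstrict le (xs ! i) w \<and> pstrict le w (xs ! Suc i))"
    proof
      assume "\<exists>w\<in>B. pstrict le (xs ! i) w \<and> pstrict le w (xs ! Suc i)"
      then obtain w where wB: "w \<in> B" and w1: "pstrict le (xs ! i) w" and w2: "pstrict le w (xs ! Suc i)"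
        by blast
      have "\<forall>x\<in>set xs. le x w \<or> le w x"
      proof
        fix x assume "x \<in> set xs"
        then obtain j where j: "j < length xs" "x = xs ! j" by (auto simp: in_set_conv_nth)
        show "le x w \<or> le w x"
        proof (cases "j \<le> i")
          case True
          then have "le x (xs ! i)" using ble j i by auto
          then show ?thesis using w1 poset_trans[OF P] nth j i wB
            by (metis Suc_lessD pstrict_def)
        next
          case False
          then have "le (xs ! Suc i) x" using ble j i by auto
          then show ?thesis using w2 poset_trans[OF P] nth j i wB
            by (metis pstrict_def)
        qed
      qed
      then have "w \<in> set xs" using maxchain_insert[OF M P wB] by blast
      then obtain j where j: "j < length xs" "w = xs ! j" by (auto simp: in_set_conv_nth)
      show False
      proof (cases "j \<le> i")
        case True
        then have "le w (xs ! i)" using ble j i by auto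
        then show False using w1 poset_antisym[OF P] nth i wB by (metis Suc_lessD pstrict_def)
      next
        case False
        then have "le (xs ! Suc i) w" using ble j i by auto
        then show False using w2 poset_antisym[OF P] nth i wB by (metis pstrict_def)
      qed
    qed
    then show ?thesis using ps nth i by (simp add: covers_def)
  qed
  have "sat_chain B le xs" using ne sub cov by (simp add: sat_chain_def)
  then show ?thesis using hd lmax by blast
qed

lemma max_chain_intro:
  assumes P: "is_poset B le" and b: "is_bottom B le b" and S: "sat_chain B le xs"
    and hd: "hd xs = b" and lmax: "\<forall>w\<in>B. \<not> pstrict le (last xs) w"
  shows "maximal_chain B le xs"
proof -
  have ne: "xs \<noteq> []" and sub: "set xs \<subseteq> B" using S by (auto simp: sat_chain_def)
  have nth: "xs ! i \<in> B" if "i < length xs" for i using sub that by auto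
  have ble: "le (xs ! i) (xs ! j)" if "i \<le> j" "j < length xs" for i j
    using sat_chain_le[OF P S] that by blast
  have s: "sorted_wrt (pstrict le) xs" using sat_chain_sorted[OF P S] .
  have ch: "is_chain B le (set xs)"
    unfolding is_chain_def
  proof (intro conjI ballI sub)
    fix x y assume "x \<in> set xs" "y \<in> set xs"
    then obtain i j where "i < length xs" "x = xs ! i" "j < length xs" "y = xs ! j"
      by (auto simp: in_set_conv_nth)
    then show "le x y \<or> le y x" using ble by (meson nat_le_linear)
  qed
  have lastn: "last xs = xs ! (length xs - 1)" using ne by (simp add: last_conv_nth)
  have bl: "\<forall>x\<in>B. le b x" using b by (auto simp: is_bottom_def)
  have mx: "C = set xs" if C: "is_chain B le C" "set xs \<subseteq> C" for C
  proof
    show "C \<subseteq> set xs"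
    proof
      fix w assume wC: "w \<in> C"
      have wB: "w \<in> B" using C wC by (auto simp: is_chain_def)
      have cmp: "le x w \<or> le w x" if "x \<in> set xs" for x using C wC that by (auto simp: is_chain_def)
      define I where "I = {i. i < length xs \<and> le (xs ! i) w}"
      have fI: "finite I" unfolding I_def by auto
      have "0 \<in> I" using ne hd bl wB by (auto simp: I_def hd_conv_nth)
      define m where "m = Max I"
      have mI: "m \<in> I" using fI \<open>0 \<in> I\<close> unfolding m_def by (intro Max_in) auto
      have mmax: "\<And>i. i \<in> I \<Longrightarrow> i \<le> m" using fI by (simp add: m_def)
      show "w \<in> set xs"
      proof (cases "Suc m < length xs")
        case False
        then have "m = length xs - 1" using mI by (auto simp: I_def)
        then have "le (last xs) w" using mI lastn by (auto simp: I_def)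
        then have "last xs = w" using lmax wB by (auto simp: pstrict_def)
        then show ?thesis using ne by auto
      next
        case True
        have "Suc m \<notin> I" using mmax by fastforce
        then have n1: "\<not> le (xs ! Suc m) w" using True by (auto simp: I_def)
        then have n2: "le w (xs ! Suc m)" using cmp[of "xs ! Suc m"] True by auto
        have nw: "w \<noteq> xs ! Suc m" using n1 poset_refl[OF P wB] by auto
        have c: "covers B le (xs ! m) (xs ! Suc m)" using sat_chain_cov[OF S True] .
        have "le (xs ! m) w" using mI by (auto simp: I_def)
        then have "w = xs ! m" using c wB n2 nw unfolding covers_def pstrict_def by blast
        then show ?thesis using mI by (auto simp: I_def)
      qed
    qed
  qed (use C in auto)
  show ?thesis unfolding maximal_chain_def using s ch mx by blast
qed

lemma max_chain_iff:
  assumes P: "is_poset B le" and b: "is_bottom B le b"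
  shows "maximal_chain B le xs \<longleftrightarrow> sat_chain B le xs \<and> hd xs = b \<and> (\<forall>w\<in>B. \<not> pstrict le (last xs) w)"
  using max_chain_imp[OF P b] max_chain_intro[OF P b] by blast




lemma poset_subset: "is_poset A le \<Longrightarrow> B \<subseteq> A \<Longrightarrow> is_poset B le"
  unfolding is_poset_def by (elim conjE) (intro conjI; blast)

lemma mchains_iff:
  assumes P: "is_poset A le" and b: "is_bottom A le z" and y: "y \<in> A"
  shows "xs \<in> mchains A le z y \<longleftrightarrow> sat_chain A le xs \<and> hd xs = z \<and> last xs = y"
proof -
  define B where "B = interval A le z y"
  have BA: "B \<subseteq> A" by (auto simp: B_def interval_def)
  have PB: "is_poset B le" using poset_subset[OF P BA] .
  have zA: "z \<in> A" and zl: "\<forall>x\<in>A. le z x" using b by (auto simp: is_bottom_def)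
  have yB: "y \<in> B" using y zl poset_refl[OF P y] by (auto simp: B_def interval_def)
  have bB: "is_bottom B le z" using zA zl poset_refl[OF P zA] y
    by (auto simp: is_bottom_def B_def interval_def)
  have cov: "covers B le x x' \<longleftrightarrow> covers A le x x'" if "x \<in> B" "x' \<in> B" for x x'
  proof
    assume c: "covers B le x x'"
    show "covers A le x x'" unfolding covers_def
    proof (intro conjI)
      show "x \<in> A" "x' \<in> A" "pstrict le x x'" using c that BA by (auto simp: covers_def)
      show "\<not> (\<exists>w\<in>A. pstrict le x w \<and> pstrict le w x')"
      proof
        assume "\<exists>w\<in>A. pstrict le x w \<and> pstrict le w x'"
        then obtain w where w: "w \<in> A" "pstrict le x w" "pstrict le w x'" by blast
        have "le x' y" using that by (auto simp: B_def interval_def)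
        moreover have "le w x'" "x' \<in> A" using w that BA by (auto simp: pstrict_def)
        ultimately have "le w y" using poset_trans[OF P, of w x' y] w y by blast
        then have "w \<in> B" using w zl by (auto simp: B_def interval_def)
        then show False using c w by (auto simp: covers_def)
      qed
    qed
  next
    assume "covers A le x x'"
    then show "covers B le x x'" using that BA by (auto simp: covers_def)
  qed
  have satB: "sat_chain B le xs \<longleftrightarrow> sat_chain A le xs" if "set xs \<subseteq> B"
    using that cov BA unfolding sat_chain_def by (auto simp: subset_iff)
  show ?thesis
  proof
    assume "xs \<in> mchains A le z y"
    then have M: "maximal_chain B le xs" by (simp add: mchains_def B_def)
    have 1: "sat_chain B le xs" "hd xs = z" "\<forall>w\<in>B. \<not> pstrict le (last xs) w"
      using max_chain_imp[OF PB bB M] by auto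
    have sub: "set xs \<subseteq> B" using 1 by (simp add: sat_chain_def)
    have lB: "last xs \<in> B" using sub 1(1) by (auto simp: sat_chain_def)
    then have "le (last xs) y" by (simp add: B_def interval_def)
    then have "last xs = y" using 1(3) yB by (auto simp: pstrict_def)
    then show "sat_chain A le xs \<and> hd xs = z \<and> last xs = y" using 1 satB sub by auto
  next
    assume a: "sat_chain A le xs \<and> hd xs = z \<and> last xs = y"
    have ne: "xs \<noteq> []" using a by (simp add: sat_chain_def)
    have sub: "set xs \<subseteq> B"
    proof
      fix x assume "x \<in> set xs"
      then obtain i where i: "i < length xs" "x = xs ! i" by (auto simp: in_set_conv_nth)
      have "le x (xs ! (length xs - 1))" using sat_chain_le[OF P, of xs i "length xs - 1"] a i by auto
      then have "le x y" using a ne by (simp add: last_conv_nth)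
      moreover have "x \<in> A" using a i by (auto simp: sat_chain_def)
      ultimately show "x \<in> B" using zl by (auto simp: B_def interval_def)
    qed
    have lm: "\<forall>w\<in>B. \<not> pstrict le (last xs) w"
      using a poset_antisym[OF P] BA y by (auto simp: pstrict_def B_def interval_def)
    have "maximal_chain B le xs" using max_chain_intro[OF PB bB] satB[OF sub] a lm by auto
    then show "xs \<in> mchains A le z y" by (simp add: mchains_def B_def)
  qed
qed

lemma sat_chain_take: "sat_chain A le xs \<Longrightarrow> 0 < n \<Longrightarrow> sat_chain A le (take n xs)"
  unfolding sat_chain_def by (auto dest: in_set_takeD)

lemma hd_take: "0 < n \<Longrightarrow> hd (take n xs) = hd xs"
  by (cases xs; cases n) auto

lemma sat_chain_drop: "sat_chain A le xs \<Longrightarrow> k < length xs \<Longrightarrow> sat_chain A le (drop k xs)"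
  unfolding sat_chain_def by (auto dest: in_set_dropD)

lemma sat_chain_snoc:
  assumes "sat_chain A le u" "covers A le (last u) a"
  shows "sat_chain A le (u @ [a])"
  unfolding sat_chain_def
proof (intro conjI allI impI)
  show "u @ [a] \<noteq> []" by simp
  show "set (u @ [a]) \<subseteq> A" using assms by (auto simp: sat_chain_def covers_def)
  fix i assume i: "Suc i < length (u @ [a])"
  show "covers A le ((u @ [a]) ! i) ((u @ [a]) ! Suc i)"
  proof (cases "Suc i < length u")
    case True then show ?thesis using assms by (simp add: nth_append sat_chain_def)
  next
    case False
    then have "i = length u - 1" "u \<noteq> []" using i assms(1) by (auto simp: sat_chain_def)
    then show ?thesis using assms(2) False by (simp add: nth_append last_conv_nth)
  qed
qed

lemma sat_chain_snoc_cov: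
  assumes "sat_chain A le (u @ [a])" "u \<noteq> []"
  shows "covers A le (last u) a"
  using assms unfolding sat_chain_def
  by (metis (no_types, lifting) One_nat_def Suc_pred length_append_singleton lessI length_greater_0_conv
      last_conv_nth nth_append nth_append_length)

lemma length_word: "length (word lam xs) = length xs - 1"
  by (simp add: word_def)

lemma nth_word: "j < length xs - 1 \<Longrightarrow> word lam xs ! j = lam (xs ! j) (xs ! Suc j)"
  by (simp add: word_def)

lemma word_snoc: "u \<noteq> [] \<Longrightarrow> word lam (u @ [a]) = word lam u @ [lam (last u) a]"
  apply (rule nth_equalityI)
   apply (auto simp: length_word nth_word nth_append last_conv_nth)
  apply (rename_tac i)
  apply (subgoal_tac "i = length u - Suc 0")
   apply simp
  apply linarith
  done

lemma cover_exists:
  assumes F: "finite A" and P: "is_poset A le" and x: "x \<in> A"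
  shows "w \<in> A \<Longrightarrow> pstrict le x w \<Longrightarrow> \<exists>w'. covers A le x w'"
proof (induction "card {v\<in>A. pstrict le x v \<and> pstrict le v w}" arbitrary: w rule: less_induct)
  case less
  show ?case
  proof (cases "\<exists>v\<in>A. pstrict le x v \<and> pstrict le v w")
    case False
    then show ?thesis using less.prems x by (auto simp: covers_def)
  next
    case True
    then obtain v where v: "v \<in> A" "pstrict le x v" "pstrict le v w" by blast
    have sub: "{u\<in>A. pstrict le x u \<and> pstrict le u v} \<subset> {u\<in>A. pstrict le x u \<and> pstrict le u w}"
    proof
      show "{u\<in>A. pstrict le x u \<and> pstrict le u v} \<subseteq> {u\<in>A. pstrict le x u \<and> pstrict le u w}"
      proof
        fix u assume u: "u \<in> {u\<in>A. pstrict le x u \<and> pstrict le u v}"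
        then have "le u w" using poset_trans[OF P, of u v w] v less.prems by (auto simp: pstrict_def)
        moreover have "u \<noteq> w"
        proof
          assume "u = w"
          then have "le v u" "le u v" using v u by (auto simp: pstrict_def)
          then show False using poset_antisym[OF P] u v by (auto simp: pstrict_def)
        qed
        ultimately show "u \<in> {u\<in>A. pstrict le x u \<and> pstrict le u w}" using u by (auto simp: pstrict_def)
      qed
      show "{u\<in>A. pstrict le x u \<and> pstrict le u v} \<noteq> {u\<in>A. pstrict le x u \<and> pstrict le u w}"
      proof
        assume eq: "{u\<in>A. pstrict le x u \<and> pstrict le u v} = {u\<in>A. pstrict le x u \<and> pstrict le u w}"
        have "v \<in> {u\<in>A. pstrict le x u \<and> pstrict le u w}" using v by blast
        then have "pstrict le v v" using eq by blast
        then show False by (simp add: pstrict_def)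
      qed
    qed
    have "card {u\<in>A. pstrict le x u \<and> pstrict le u v} < card {u\<in>A. pstrict le x u \<and> pstrict le u w}"
      using F sub by (intro psubset_card_mono) auto
    then show ?thesis using less.hyps v by blast
  qed
qed




locale EWL =
  fixes A :: "'a set" and le :: "'a \<Rightarrow> 'a \<Rightarrow> bool" and z :: 'a and lam :: "'a \<Rightarrow> 'a \<Rightarrow> 'l::order"
  assumes P: "is_poset A le" and bot: "is_bottom A le z" and rts: "rank_two_switching A le z lam"
begin

definition SC where "SC y = {xs. sat_chain A le xs \<and> hd xs = z \<and> last xs = y}"

lemma zA: "z \<in> A" using bot by (simp add: is_bottom_def)
lemma zl: "x \<in> A \<Longrightarrow> le z x" using bot by (simp add: is_bottom_def)

lemma mch: "y \<in> A \<Longrightarrow> xs \<in> mchains A le z y \<longleftrightarrow> xs \<in> SC y"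
  using mchains_iff[OF P bot] by (simp add: SC_def)

lemma switch_spec:
  assumes "sat_chain A le xs" "hd xs = z" "0 < i" "Suc i < length xs"
    "lam (xs ! (i - 1)) (xs ! i) < lam (xs ! i) (xs ! Suc i)"
  defines "x' \<equiv> switch_elem A le lam (xs ! (i - 1)) (xs ! i) (xs ! Suc i)"
  shows "covers A le (xs ! (i - 1)) x' \<and> covers A le x' (xs ! Suc i) \<and>
            lam (xs ! (i - 1)) x' = lam (xs ! i) (xs ! Suc i) \<and>
            lam x' (xs ! Suc i) = lam (xs ! (i - 1)) (xs ! i)"
proof -
  have "\<exists>!x'. covers A le (xs ! (i - 1)) x' \<and> covers A le x' (xs ! Suc i) \<and>
            lam (xs ! (i - 1)) x' = lam (xs ! i) (xs ! Suc i) \<and>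
            lam x' (xs ! Suc i) = lam (xs ! (i - 1)) (xs ! i)"
    using rts assms(1-5) unfolding rank_two_switching_def by blast
  from theI'[OF this] show ?thesis unfolding x'_def switch_elem_def .
qed

lemma qexch_inv:
  assumes S: "sat_chain A le xs" and H: "hd xs = z"
  shows "sat_chain A le (qexch A le lam i xs) \<and> hd (qexch A le lam i xs) = z \<and>
         last (qexch A le lam i xs) = last xs \<and> length (qexch A le lam i xs) = length xs \<and>
         mset (word lam (qexch A le lam i xs)) = mset (word lam xs)"
proof (cases "0 < i \<and> Suc i < length xs \<and> lam (xs ! (i - 1)) (xs ! i) < lam (xs ! i) (xs ! Suc i)")
  case False
  then have "qexch A le lam i xs = xs" unfolding qexch_def by (rule if_not_P)
  then show ?thesis using S H by simp
next
  case True
  define x' where "x' = switch_elem A le lam (xs ! (i - 1)) (xs ! i) (xs ! Suc i)"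
  have sp: "covers A le (xs ! (i - 1)) x'" "covers A le x' (xs ! Suc i)"
    "lam (xs ! (i - 1)) x' = lam (xs ! i) (xs ! Suc i)"
    "lam x' (xs ! Suc i) = lam (xs ! (i - 1)) (xs ! i)"
    using switch_spec[OF S H] True unfolding x'_def by auto
  have q: "qexch A le lam i xs = xs[i := x']" using True by (simp add: qexch_def x'_def)
  have ne: "xs \<noteq> []" using True by auto
  have nq: "i - 1 \<noteq> i" "Suc (i - 1) = i" "i - 1 < length xs" "i < length xs" using True by auto
  have up1: "xs[i := x'] ! (i - 1) = xs ! (i - 1)" using nq by simp
  have up2: "xs[i := x'] ! i = x'" using nq by simp
  have up3: "xs[i := x'] ! Suc i = xs ! Suc i" by simp
  have "i < length xs - 1" using True by auto
  then have wi: "word lam xs ! i = lam (xs ! i) (xs ! Suc i)" by (rule nth_word)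
  have "i - 1 < length xs - 1" using True by auto
  then have "word lam xs ! (i - 1) = lam (xs ! (i - 1)) (xs ! Suc (i - 1))" by (rule nth_word)
  then have wi1: "word lam xs ! (i - 1) = lam (xs ! (i - 1)) (xs ! i)" using nq by simp
  have x'A: "x' \<in> A" using sp(1) by (simp add: covers_def)
  have len: "length (xs[i := x']) = length xs" by simp
  have hd: "hd (xs[i := x']) = z" using True H ne by (simp add: hd_conv_nth)
  have "i \<noteq> length xs - 1" using True by auto
  then have last: "last (xs[i := x']) = last xs" using True ne by (simp add: last_conv_nth)
  have sat: "sat_chain A le (xs[i := x'])"
    unfolding sat_chain_def
  proof (intro conjI allI impI)
    show "xs[i := x'] \<noteq> []" using ne by simp
    show "set (xs[i := x']) \<subseteq> A" using S x'A set_update_subset_insert[of xs i x']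
      by (auto simp: sat_chain_def)
    fix j assume j: "Suc j < length (xs[i := x'])"
    show "covers A le (xs[i := x'] ! j) (xs[i := x'] ! Suc j)"
    proof -
      consider "j = i - 1" | "j = i" | "j \<noteq> i - 1" "j \<noteq> i" by blast
      then show ?thesis
      proof cases
        case 1 then show ?thesis using sp nq up1 up2 by simp
      next
        case 2 then show ?thesis using sp True by simp
      next
        case 3
        then have "Suc j \<noteq> i" using True by auto
        then show ?thesis using 3 j sat_chain_cov[OF S, of j] by simp
      qed
    qed
  qed
  have w: "word lam (xs[i := x']) = (word lam xs)[i - 1 := word lam xs ! i, i := word lam xs ! (i - 1)]"
  proof (rule nth_equalityI)
    show "length (word lam (xs[i := x'])) = length ((word lam xs)[i - 1 := word lam xs ! i, i := word lam xs ! (i - 1)])"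
      by (simp add: length_word)
    fix j assume "j < length (word lam (xs[i := x']))"
    then have j: "j < length xs - 1" by (simp add: length_word)
    consider "j = i - 1" | "j = i" | "j \<noteq> i - 1" "j \<noteq> i" by blast
    then show "word lam (xs[i := x']) ! j = (word lam xs)[i - 1 := word lam xs ! i, i := word lam xs ! (i - 1)] ! j"
    proof cases
      case 1 then show ?thesis using sp nq up1 up2 j True wi wi1 by (simp add: nth_word length_word)
    next
      case 2 then show ?thesis using sp True j wi wi1 by (simp add: nth_word length_word)
    next
      case 3
      then have "Suc j \<noteq> i" using True by auto
      then show ?thesis using 3 j by (simp add: nth_word length_word)
    qed
  qed
  have "mset (word lam (xs[i := x'])) = mset (word lam xs)"
    unfolding w
  proof (rule mset_swap)
    show "i < length (word lam xs)" "i - 1 < length (word lam xs)" using True by (auto simp: length_word)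
  qed
  then show ?thesis using q sat hd last len by simp
qed

lemma exch_I: "c \<in> mchains A le x y \<Longrightarrow> (c, qexch A le lam i c) \<in> exch_rel A le lam x y"
  unfolding exch_rel_def by blast

lemma exch_D: "(e, e') \<in> exch_rel A le lam x y \<Longrightarrow> e \<in> mchains A le x y \<and> (\<exists>i. e' = qexch A le lam i e)"
  by (auto simp: exch_rel_def)

lemma lsim_inv:
  assumes y: "y \<in> A" and L: "lsim A le lam z y c d"
  shows "c \<in> SC y \<and> d \<in> SC y \<and> length d = length c \<and> mset (word lam d) = mset (word lam c)"
proof -
  let ?R = "exch_rel A le lam z y"
  have c: "c \<in> SC y" using L mch[OF y] by (simp add: lsim_def)
  have "(c, d) \<in> (?R \<union> ?R\<inverse>)\<^sup>*" using L by (simp add: lsim_def)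
  then have "d \<in> SC y \<and> length d = length c \<and> mset (word lam d) = mset (word lam c)"
  proof (induction rule: rtrancl_induct)
    case base then show ?case using c by simp
  next
    case (step e e')
    show ?case
    proof (cases "(e, e') \<in> ?R")
      case True
      then obtain i where e': "e' = qexch A le lam i e" using exch_D by blast
      have "e \<in> SC y" using step by simp
      then show ?thesis using qexch_inv[of e i] step e' by (auto simp: SC_def)
    next
      case False
      then have "(e', e) \<in> ?R" using step by auto
      then obtain i where e: "e = qexch A le lam i e'" and m: "e' \<in> mchains A le z y" using exch_D by blast
      have "e' \<in> SC y" using m mch[OF y] by simp
      then show ?thesis using qexch_inv[of e' i] step e by (auto simp: SC_def)
    qed
  qed
  then show ?thesis using c by simp
qed

lemma lsim_refl: "y \<in> A \<Longrightarrow> c \<in> SC y \<Longrightarrow> lsim A le lam z y c c"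
  using mch by (simp add: lsim_def)

lemma lsim_sym: "lsim A le lam x y c d \<Longrightarrow> lsim A le lam x y d c"
proof -
  assume L: "lsim A le lam x y c d"
  let ?R = "exch_rel A le lam x y"
  have "(d, c) \<in> ((?R \<union> ?R\<inverse>)\<inverse>)\<^sup>*" using L by (simp add: lsim_def rtrancl_converseI)
  moreover have "(?R \<union> ?R\<inverse>)\<inverse> = ?R \<union> ?R\<inverse>" by auto
  ultimately show ?thesis using L by (simp add: lsim_def)
qed

lemma lsim_trans: "lsim A le lam x y c d \<Longrightarrow> lsim A le lam x y d e \<Longrightarrow> lsim A le lam x y c e"
  unfolding lsim_def using rtrancl_trans by fast

lemma qexch_snoc:
  assumes "qexch A le lam i u \<noteq> u"
  shows "qexch A le lam i (u @ [a]) = qexch A le lam i u @ [a]"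
proof -
  have C: "0 < i \<and> Suc i < length u \<and> lam (u ! (i - 1)) (u ! i) < lam (u ! i) (u ! Suc i)"
    using assms by (auto simp: qexch_def split: if_splits)
  then have e: "(u @ [a]) ! (i - 1) = u ! (i - 1)" "(u @ [a]) ! i = u ! i" "(u @ [a]) ! Suc i = u ! Suc i"
    by (auto simp: nth_append)
  show ?thesis using C unfolding qexch_def e by (simp add: list_update_append1)
qed

lemma SC_snoc: "u \<in> SC y \<Longrightarrow> covers A le y a \<Longrightarrow> u @ [a] \<in> SC a"
  unfolding SC_def using sat_chain_snoc[of A le u a] by (auto simp: sat_chain_def)

lemma lsim_snoc:
  assumes y: "y \<in> A" and L: "lsim A le lam z y c d" and cov: "covers A le y a"
  shows "lsim A le lam z a (c @ [a]) (d @ [a])"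
proof -
  let ?R = "exch_rel A le lam z y"
  let ?R' = "exch_rel A le lam z a"
  have aA: "a \<in> A" using cov by (simp add: covers_def)
  have c: "c \<in> SC y" using L mch[OF y] by (simp add: lsim_def)
  have ext: "u @ [a] \<in> mchains A le z a" if "u \<in> SC y" for u
    using SC_snoc[OF that cov] mch[OF aA] by simp
  have "(c, d) \<in> (?R \<union> ?R\<inverse>)\<^sup>*" using L by (simp add: lsim_def)
  then have "d \<in> SC y \<and> (c @ [a], d @ [a]) \<in> (?R' \<union> ?R'\<inverse>)\<^sup>*"
  proof (induction rule: rtrancl_induct)
    case base then show ?case using c by simp
  next
    case (step e e')
    have eS: "e \<in> SC y" using step by simp
    show ?case
    proof (cases "(e, e') \<in> ?R")
      case True
      then obtain i where e': "e' = qexch A le lam i e" using exch_D by blast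
      have e'S: "e' \<in> SC y" using qexch_inv[of e i] eS e' by (auto simp: SC_def)
      show ?thesis
      proof (cases "e' = e")
        case True then show ?thesis using step by simp
      next
        case False
        then have "qexch A le lam i (e @ [a]) = e' @ [a]" using qexch_snoc e' by metis
        then have "(e @ [a], e' @ [a]) \<in> ?R'" using exch_I[OF ext[OF eS], of i] by simp
        then show ?thesis using step e'S by (meson UnI1 rtrancl.rtrancl_into_rtrancl)
      qed
    next
      case False
      then have "(e', e) \<in> ?R" using step by auto
      then obtain i where e: "e = qexch A le lam i e'" and m: "e' \<in> mchains A le z y" using exch_D by blast
      have e'S: "e' \<in> SC y" using m mch[OF y] by simp
      show ?thesis
      proof (cases "e' = e")
        case True then show ?thesis using step by simp
      next
        case False
        then have "qexch A le lam i (e' @ [a]) = e @ [a]" using qexch_snoc e by metis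
        then have "(e' @ [a], e @ [a]) \<in> ?R'" using exch_I[OF ext[OF e'S], of i] by simp
        then show ?thesis using step e'S by (meson UnI2 converseI rtrancl.rtrancl_into_rtrancl)
      qed
    qed
  qed
  then show ?thesis using ext c unfolding lsim_def by blast
qed

lemma lsim_app:
  "sat_chain A le (y # s) \<Longrightarrow> lsim A le lam z y c d \<Longrightarrow> lsim A le lam z (last (y # s)) (c @ s) (d @ s)"
proof (induction s arbitrary: y c d)
  case Nil then show ?case by simp
next
  case (Cons a s)
  have yA: "y \<in> A" using Cons.prems by (simp add: sat_chain_def)
  have cov: "covers A le y a" using sat_chain_cov[OF Cons.prems(1), of 0] by simp
  have s2: "sat_chain A le (a # s)" using sat_chain_drop[OF Cons.prems(1), of 1] by simp
  have "lsim A le lam z a (c @ [a]) (d @ [a])" using lsim_snoc[OF yA Cons.prems(2) cov] .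
  from Cons.IH[OF s2 this] show ?case by simp
qed

end




lemma drop_last_app: "u \<noteq> [] \<Longrightarrow> drop (length u - 1) (u @ s) = last u # s"
  by (cases u rule: rev_cases) auto

context EWL begin

definition cls where "cls c = {d. chain_equiv A le z lam c d}"
abbreviation "CS \<equiv> Cset A le z"
abbreviation "QC \<equiv> Q_carrier A le z lam"
abbreviation "QL \<equiv> Q_le A le z lam"

lemma Cset_iff: "c \<in> CS \<longleftrightarrow> sat_chain A le c \<and> hd c = z" by (simp add: Cset_def)
lemma Cset_SC: "c \<in> CS \<Longrightarrow> c \<in> SC (last c)" by (simp add: Cset_def SC_def)
lemma Cset_last: "c \<in> CS \<Longrightarrow> last c \<in> A"
  by (auto simp: Cset_def sat_chain_def)
lemma SC_Cset: "c \<in> SC y \<Longrightarrow> c \<in> CS \<and> last c = y" by (simp add: Cset_def SC_def)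

lemma cls_mem: "c \<in> CS \<Longrightarrow> d \<in> cls c \<longleftrightarrow> d \<in> CS \<and> last d = last c \<and> lsim A le lam z (last c) c d"
  by (auto simp: cls_def chain_equiv_def)

lemma cls_self: "c \<in> CS \<Longrightarrow> c \<in> cls c"
  using lsim_refl[OF Cset_last Cset_SC] cls_mem by blast

lemma cls_props: "c \<in> CS \<Longrightarrow> d \<in> cls c \<Longrightarrow>
    d \<in> CS \<and> last d = last c \<and> length d = length c \<and> mset (word lam d) = mset (word lam c)"
  using lsim_inv[OF Cset_last] cls_mem by metis

lemma cls_eq: assumes c: "c \<in> CS" and d: "d \<in> cls c" shows "cls d = cls c"
proof -
  have d': "d \<in> CS" "last d = last c" "lsim A le lam z (last c) c d" using cls_mem[OF c] d by auto
  show ?thesis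
  proof (intro set_eqI)
    fix e
    show "e \<in> cls d \<longleftrightarrow> e \<in> cls c"
      using cls_mem[OF c, of e] cls_mem[OF d'(1), of e] d' lsim_trans lsim_sym by metis
  qed
qed

lemma cls_same: "c \<in> CS \<Longrightarrow> d \<in> CS \<Longrightarrow> cls c = cls d \<Longrightarrow> length c = length d \<and> last c = last d"
  using cls_self[of d] cls_props[of c d] by auto

lemma cls_lsim: "c \<in> CS \<Longrightarrow> d \<in> CS \<Longrightarrow> cls c = cls d \<Longrightarrow> lsim A le lam z (last c) c d"
  using cls_self[of d] cls_mem[of c d] by auto

lemma QC_iff: "X \<in> QC \<longleftrightarrow> (\<exists>c\<in>CS. X = cls c)"
  by (auto simp: Q_carrier_def cls_def)

lemma QC_mem: "X \<in> QC \<Longrightarrow> c \<in> X \<Longrightarrow> c \<in> CS \<and> X = cls c"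
  using QC_iff cls_props cls_eq by metis

lemma prefix_of_subset:
  assumes c: "c \<in> CS" and d: "d \<in> CS" and sub: "set c \<subseteq> set d"
  shows "c = take (length c) d"
proof -
  have Sc: "sat_chain A le c" and Sd: "sat_chain A le d" and hc: "hd c = z" and hd: "hd d = z"
    using c d by (auto simp: Cset_def)
  have cne: "c \<noteq> []" and dne: "d \<noteq> []" using Sc Sd by (auto simp: sat_chain_def)
  have key: "i < length c \<Longrightarrow> i < length d \<and> c ! i = d ! i" for i
  proof (induction i)
    case 0 then show ?case using hc hd cne dne by (simp add: hd_conv_nth)
  next
    case (Suc i)
    have IH: "i < length d" "c ! i = d ! i" using Suc by auto
    have "c ! Suc i \<in> set d" using sub Suc.prems by auto
    then obtain m where m: "m < length d" "d ! m = c ! Suc i" by (auto simp: in_set_conv_nth)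
    have cov: "covers A le (c ! i) (c ! Suc i)" using sat_chain_cov[OF Sc Suc.prems] .
    have "m = Suc i"
    proof (rule ccontr)
      assume ne: "m \<noteq> Suc i"
      show False
      proof (cases "m \<le> i")
        case True
        then have "le (d ! m) (d ! i)" using sat_chain_le[OF P Sd] IH by blast
        then show False using cov m IH poset_antisym[OF P]
          by (auto simp: covers_def pstrict_def)
      next
        case False
        then have mi: "Suc i < m" using ne by auto
        have "pstrict le (d ! i) (d ! Suc i)" using sat_chain_lt[OF P Sd, of i "Suc i"] mi m by auto
        moreover have "pstrict le (d ! Suc i) (d ! m)" using sat_chain_lt[OF P Sd, of "Suc i" m] mi m by blast
        moreover have "d ! Suc i \<in> A" using sat_chain_nth[OF Sd] mi m by auto
        ultimately show False using cov m IH unfolding covers_def by metis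
      qed
    qed
    then show ?case using m by auto
  qed
  have "length c \<le> length d" using key[of "length c - 1"] cne by auto
  then show ?thesis using key by (intro nth_equalityI) auto
qed

lemma QB_char: "(X, Y) \<in> Q_base A le z lam \<Longrightarrow> \<exists>c r. c \<in> CS \<and> c @ r \<in> CS \<and> X = cls c \<and> Y = cls (c @ r)"
proof -
  assume "(X, Y) \<in> Q_base A le z lam"
  then obtain c d where X: "X \<in> QC" "c \<in> X" and Y: "Y \<in> QC" "d \<in> Y" and s: "set c \<subseteq> set d"
    by (auto simp: Q_base_def)
  have c: "c \<in> CS" "X = cls c" using QC_mem[OF X] by auto
  have d: "d \<in> CS" "Y = cls d" using QC_mem[OF Y] by auto
  have "d = c @ drop (length c) d" using prefix_of_subset[OF c(1) d(1) s] by (metis append_take_drop_id)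
  then show ?thesis using c d by metis
qed

lemma QB_intro: "c \<in> CS \<Longrightarrow> c @ r \<in> CS \<Longrightarrow> (cls c, cls (c @ r)) \<in> Q_base A le z lam"
proof -
  assume a: "c \<in> CS" "c @ r \<in> CS"
  have 1: "cls c \<in> QC" "cls (c @ r) \<in> QC" using QC_iff a by blast+
  have 2: "c \<in> cls c" "c @ r \<in> cls (c @ r)" using cls_self a by blast+
  have 3: "set c \<subseteq> set (c @ r)" by simp
  show ?thesis unfolding Q_base_def using 1 2 3 by blast
qed

lemma QL_intro: "c \<in> CS \<Longrightarrow> c @ r \<in> CS \<Longrightarrow> QL (cls c) (cls (c @ r))"
  unfolding Q_le_def using QB_intro by blast

lemma QL_char: "QL X Y \<Longrightarrow> \<exists>c r. c \<in> CS \<and> c @ r \<in> CS \<and> X = cls c \<and> Y = cls (c @ r)"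
  unfolding Q_le_def
proof (induction rule: trancl_induct)
  case (base Y) then show ?case using QB_char by blast
next
  case (step Y W)
  obtain c r where cr: "c \<in> CS" "c @ r \<in> CS" "X = cls c" "Y = cls (c @ r)" using step.IH by blast
  obtain d s where ds: "d \<in> CS" "d @ s \<in> CS" "Y = cls d" "W = cls (d @ s)" using QB_char[OF step.hyps(2)] by blast
  show ?case
  proof (cases "s = []")
    case True then show ?thesis using cr ds by auto
  next
    case False
    have dne: "d \<noteq> []" using ds by (auto simp: Cset_def sat_chain_def)
    have sc: "sat_chain A le (last d # s)"
    proof -
      have "length d - 1 < length (d @ s)" using dne by (cases d) auto
      then have "sat_chain A le (drop (length d - 1) (d @ s))"
        using sat_chain_drop[of A le "d @ s" "length d - 1"] ds(2) by (auto simp: Cset_def)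
      then show ?thesis using drop_last_app[OF dne, of s] by simp
    qed
    have L: "lsim A le lam z (last d) d (c @ r)" using cls_lsim[OF ds(1) cr(2)] ds cr by simp
    have L2: "lsim A le lam z (last (d @ s)) (d @ s) (c @ r @ s)"
      using lsim_app[OF sc L] False by (simp add: last_append)
    have lA: "last (d @ s) \<in> A" using Cset_last[OF ds(2)] .
    have m: "c @ r @ s \<in> cls (d @ s)"
      using lsim_inv[OF lA L2] cls_mem[OF ds(2)] L2 SC_Cset by metis
    have "cls (c @ r @ s) = W" using cls_eq[OF ds(2) m] ds by simp
    moreover have "c @ r @ s \<in> CS" using cls_props[OF ds(2) m] by simp
    ultimately show ?thesis using cr by metis
  qed
qed

lemma QL_len:
  assumes c: "c \<in> CS" and d: "d \<in> CS" and L: "QL (cls c) (cls d)"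
  shows "length c \<le> length d \<and> (length c = length d \<longrightarrow> cls c = cls d)"
proof -
  obtain c' r where cr: "c' \<in> CS" "c' @ r \<in> CS" "cls c = cls c'" "cls d = cls (c' @ r)"
    using QL_char[OF L] by blast
  have "length c = length c'" "length d = length c' + length r"
    using cls_same[OF c cr(1) cr(3)] cls_same[OF d cr(2) cr(4)] by auto
  then show ?thesis using cr by auto
qed

lemma QC_poset: "is_poset QC QL"
  unfolding is_poset_def
proof (intro conjI ballI impI)
  fix X assume "X \<in> QC"
  then obtain c where c: "c \<in> CS" "X = cls c" using QC_iff by blast
  show "QL X X" using QL_intro[OF c(1), of "[]"] c by simp
next
  fix X Y assume X: "X \<in> QC" and Y: "Y \<in> QC" and L: "QL X Y \<and> QL Y X"
  obtain c where c: "c \<in> CS" "X = cls c" using QC_iff X by blast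
  obtain d where d: "d \<in> CS" "Y = cls d" using QC_iff Y by blast
  have "QL (cls c) (cls d)" "QL (cls d) (cls c)" using L c d by auto
  then have "length c \<le> length d \<and> (length c = length d \<longrightarrow> cls c = cls d)"
    "length d \<le> length c" using QL_len[OF c(1) d(1)] QL_len[OF d(1) c(1)] by blast+
  then show "X = Y" using c d by (metis le_antisym)
next
  fix X Y W assume "QL X Y \<and> QL Y W"
  then show "QL X W" unfolding Q_le_def by auto
qed

lemma zCS: "[z] \<in> CS" using zA by (simp add: Cset_def sat_chain_def)

lemma Qbot_cls: "Q_bottom A le z lam = cls [z]" by (simp add: Q_bottom_def cls_def)

lemma QC_bottom: "is_bottom QC QL (Q_bottom A le z lam)"
  unfolding is_bottom_def
proof (intro conjI ballI)
  show "Q_bottom A le z lam \<in> QC" using QC_iff zCS Qbot_cls by blast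
  fix X assume "X \<in> QC"
  then obtain c where c: "c \<in> CS" "X = cls c" using QC_iff by blast
  have "c = [z] @ tl c" using c(1) by (cases c) (auto simp: Cset_def sat_chain_def)
  then show "QL (Q_bottom A le z lam) X" using QL_intro[OF zCS, of "tl c"] c Qbot_cls by simp
qed

end




context EWL begin

definition hmap where "hmap xs = map (\<lambda>j. cls (take (Suc j) xs)) [0..<length xs]"
definition fmap :: "'a list set list \<Rightarrow> 'a list" where "fmap Xs = map (\<lambda>X. last (SOME c. c \<in> X)) Xs"

lemma take_CS: "xs \<in> CS \<Longrightarrow> 0 < n \<Longrightarrow> take n xs \<in> CS"
  using sat_chain_take hd_take by (auto simp: Cset_def)

lemma last_take: "j < length xs \<Longrightarrow> last (take (Suc j) xs) = xs ! j"
  by (simp add: take_Suc_conv_app_nth)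

lemma length_hmap[simp]: "length (hmap xs) = length xs" by (simp add: hmap_def)
lemma nth_hmap: "j < length xs \<Longrightarrow> hmap xs ! j = cls (take (Suc j) xs)" by (simp add: hmap_def)

lemma CS_ne: "xs \<in> CS \<Longrightarrow> xs \<noteq> []" by (simp add: Cset_def sat_chain_def)

lemma hmap_sat:
  assumes xs: "xs \<in> CS"
  shows "sat_chain QC QL (hmap xs) \<and> hd (hmap xs) = Q_bottom A le z lam"
proof -
  have ne: "xs \<noteq> []" using CS_ne[OF xs] .
  have inQC: "hmap xs ! j \<in> QC" if "j < length xs" for j
    using nth_hmap[OF that] take_CS[OF xs, of "Suc j"] QC_iff by auto
  have sat: "sat_chain QC QL (hmap xs)"
    unfolding sat_chain_def
  proof (intro conjI allI impI)
    show "hmap xs \<noteq> []" using ne by (simp add: hmap_def)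
    show "set (hmap xs) \<subseteq> QC" using inQC by (auto simp: in_set_conv_nth)
    fix j assume j: "Suc j < length (hmap xs)"
    define a where "a = take (Suc j) xs"
    define b where "b = a @ [xs ! Suc j]"
    have bt: "b = take (Suc (Suc j)) xs" using j by (simp add: a_def b_def take_Suc_conv_app_nth)
    have aC: "a \<in> CS" and bC: "b \<in> CS" using take_CS[OF xs] a_def bt by auto
    have la: "length a = Suc j" and lb: "length b = Suc (Suc j)" using j by (auto simp: a_def b_def)
    have X: "hmap xs ! j = cls a" and Y: "hmap xs ! Suc j = cls b" using j nth_hmap bt a_def by auto
    have ne: "cls a \<noteq> cls b" using cls_same[OF aC bC] la lb by auto
    have L: "QL (cls a) (cls b)" using QL_intro[OF aC, of "[xs ! Suc j]"] bC b_def by simp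
    have nb: "\<not> (\<exists>W\<in>QC. pstrict QL (cls a) W \<and> pstrict QL W (cls b))"
    proof
      assume "\<exists>W\<in>QC. pstrict QL (cls a) W \<and> pstrict QL W (cls b)"
      then obtain W where W: "W \<in> QC" "pstrict QL (cls a) W" "pstrict QL W (cls b)" by blast
      obtain w where w: "w \<in> CS" "W = cls w" using QC_iff W(1) by blast
      have 1: "length a \<le> length w" "length a = length w \<longrightarrow> cls a = cls w"
        using QL_len[OF aC w(1)] W w by (auto simp: pstrict_def)
      have 2: "length w \<le> length b" "length w = length b \<longrightarrow> cls w = cls b"
        using QL_len[OF w(1) bC] W w by (auto simp: pstrict_def)
      show False using 1 2 la lb W w by (auto simp: pstrict_def)
    qed
    show "covers QC QL (hmap xs ! j) (hmap xs ! Suc j)"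
      unfolding X Y covers_def pstrict_def using nb L ne inQC j X Y
      by (metis length_hmap Suc_lessD pstrict_def)
  qed
  have "take 1 xs = [z]" using xs ne by (cases xs) (auto simp: Cset_def)
  then have "hd (hmap xs) = Q_bottom A le z lam" using ne nth_hmap[of 0 xs] Qbot_cls
    by (simp add: hd_conv_nth hmap_def)
  then show ?thesis using sat by simp
qed

lemma fmap_hmap:
  assumes xs: "xs \<in> CS" shows "fmap (hmap xs) = xs"
proof (rule nth_equalityI)
  show "length (fmap (hmap xs)) = length xs" by (simp add: fmap_def)
  fix j assume "j < length (fmap (hmap xs))"
  then have j: "j < length xs" by (simp add: fmap_def)
  define a where "a = take (Suc j) xs"
  have aC: "a \<in> CS" using take_CS[OF xs] a_def by auto
  have "(SOME c. c \<in> cls a) \<in> cls a" using cls_self[OF aC] by (rule someI)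
  then have "last (SOME c. c \<in> cls a) = last a" using cls_props[OF aC] by blast
  moreover have "last a = xs ! j" using j by (simp add: a_def last_take)
  ultimately show "fmap (hmap xs) ! j = xs ! j" using j nth_hmap[OF j] by (simp add: fmap_def a_def)
qed

lemma hmap_snoc: "hmap (ys @ [a]) = hmap ys @ [cls (ys @ [a])]"
  unfolding hmap_def by (auto intro!: map_cong)

lemma last_hmap: "ys \<noteq> [] \<Longrightarrow> last (hmap ys) = cls ys"
  by (simp add: hmap_def last_map)

lemma hmap_onto:
  "sat_chain QC QL Xs \<Longrightarrow> hd Xs = Q_bottom A le z lam \<Longrightarrow> \<exists>xs\<in>CS. hmap xs = Xs"
proof (induction Xs rule: rev_induct)
  case Nil then show ?case by (simp add: sat_chain_def)
next
  case (snoc Y Ys)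
  show ?case
  proof (cases "Ys = []")
    case True
    have "hmap [z] = [cls [z]]" by (simp add: hmap_def)
    then show ?thesis using True snoc.prems Qbot_cls zCS by auto
  next
    case False
    have sYs: "sat_chain QC QL Ys"
      using sat_chain_take[OF snoc.prems(1), of "length Ys"] False by simp
    have hYs: "hd Ys = Q_bottom A le z lam" using snoc.prems False by simp
    obtain ys where ys: "ys \<in> CS" "hmap ys = Ys" using snoc.IH[OF sYs hYs] by blast
    have ysne: "ys \<noteq> []" using CS_ne[OF ys(1)] .
    have cov: "covers QC QL (cls ys) Y"
      using sat_chain_snoc_cov[OF snoc.prems(1) False] last_hmap[OF ysne] ys by simp
    then have "QL (cls ys) Y" by (simp add: covers_def pstrict_def)
    then obtain c r where cr: "c \<in> CS" "c @ r \<in> CS" "cls ys = cls c" "Y = cls (c @ r)"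
      using QL_char by blast
    have rne: "r \<noteq> []"
    proof
      assume "r = []"
      then have "Y = cls ys" using cr(3,4) by simp
      then show False using cov by (simp add: covers_def pstrict_def)
    qed
    have r1: "length r = 1"
    proof (rule ccontr)
      assume "length r \<noteq> 1"
      moreover have "length r \<noteq> 0" using rne by simp
      ultimately have r2: "2 \<le> length r" by linarith
      define w where "w = c @ [hd r]"
      have wt: "w = take (Suc (length c)) (c @ r)" using rne by (cases r) (auto simp: w_def)
      have wC: "w \<in> CS" unfolding wt by (rule take_CS[OF cr(2)]) simp
      have wr: "c @ r = w @ tl r" using rne by (cases r) (auto simp: w_def)
      have lw: "length w = Suc (length c)" by (simp add: w_def)
      have 1: "QL (cls ys) (cls w)" using QL_intro[OF cr(1) ] wC cr(3) w_def by simp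
      have 2: "QL (cls w) Y" using QL_intro[OF wC, of "tl r"] wr cr by simp
      have 3: "cls ys \<noteq> cls w" using cls_same[OF cr(1) wC] cr(3) lw by auto
      have 4: "cls w \<noteq> Y" using cls_same[OF wC cr(2)] cr(4) lw r2 by auto
      have "cls w \<in> QC" using QC_iff wC by blast
      then show False using cov 1 2 3 4 by (auto simp: covers_def pstrict_def)
    qed
    then obtain a where ra: "r = [a]" by (cases r) auto
    have cne: "c \<noteq> []" using CS_ne[OF cr(1)] .
    have cova: "covers A le (last c) a"
      using sat_chain_snoc_cov[of A le c a] cr(2) ra cne by (simp add: Cset_def)
    have L: "lsim A le lam z (last c) c ys" using cls_lsim[OF cr(1) ys(1)] cr(3) by simp
    have L2: "lsim A le lam z a (c @ [a]) (ys @ [a])"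
      using lsim_snoc[OF Cset_last[OF cr(1)] L cova] .
    have aA: "a \<in> A" using cova by (simp add: covers_def)
    have yaC: "ys @ [a] \<in> CS" using lsim_inv[OF aA L2] SC_Cset by blast
    have "ys @ [a] \<in> cls (c @ [a])" using cls_mem[of "c @ [a]" "ys @ [a]"] cr(2) ra yaC L2 by simp
    then have "cls (ys @ [a]) = Y" using cls_eq[of "c @ [a]"] cr ra by simp
    then have "hmap (ys @ [a]) = Ys @ [Y]" using hmap_snoc ys by simp
    then show ?thesis using yaC by blast
  qed
qed

lemma label_mset_cls: "c \<in> CS \<Longrightarrow> label_mset lam (cls c) = mset (word lam c)"
proof -
  assume c: "c \<in> CS"
  have "(SOME d. d \<in> cls c) \<in> cls c" using cls_self[OF c] by (rule someI)
  then show ?thesis using cls_props[OF c] by (simp add: label_mset_def)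
qed

lemma word_hmap:
  assumes xs: "xs \<in> CS" shows "word (Q_label lam) (hmap xs) = word lam xs"
proof (rule nth_equalityI)
  show "length (word (Q_label lam) (hmap xs)) = length (word lam xs)" by (simp add: length_word)
  fix j assume "j < length (word (Q_label lam) (hmap xs))"
  then have j: "j < length xs - 1" by (simp add: length_word)
  define a where "a = take (Suc j) xs"
  define b where "b = a @ [xs ! Suc j]"
  have bt: "b = take (Suc (Suc j)) xs" using j by (simp add: a_def b_def take_Suc_conv_app_nth)
  have aC: "a \<in> CS" and bC: "b \<in> CS" using take_CS[OF xs] a_def bt by auto
  have ane: "a \<noteq> []" using CS_ne[OF aC] .
  have la: "last a = xs ! j" using j by (simp add: a_def last_take)
  have X: "hmap xs ! j = cls a" and Y: "hmap xs ! Suc j = cls b" using j nth_hmap bt a_def by auto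
  have "label_mset lam (cls b) - label_mset lam (cls a) = {#lam (xs ! j) (xs ! Suc j)#}"
  proof -
    have "word lam b = word lam a @ [lam (xs ! j) (xs ! Suc j)]"
      using word_snoc[OF ane, of lam "xs ! Suc j"] la b_def by simp
    then show ?thesis using label_mset_cls[OF aC] label_mset_cls[OF bC] by simp
  qed
  then have "Q_label lam (cls a) (cls b) = lam (xs ! j) (xs ! Suc j)"
    unfolding Q_label_def by simp
  then show "word (Q_label lam) (hmap xs) ! j = word lam xs ! j"
    using j X Y by (simp add: nth_word)
qed

lemma max_corr:
  assumes F: "finite A" and xs: "xs \<in> CS"
  shows "(\<forall>W\<in>QC. \<not> pstrict QL (last (hmap xs)) W) \<longleftrightarrow> (\<forall>w\<in>A. \<not> pstrict le (last xs) w)"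
proof -
  have ne: "xs \<noteq> []" using CS_ne[OF xs] .
  have lh: "last (hmap xs) = cls xs" using last_hmap[OF ne] .
  show ?thesis
  proof
    assume m: "\<forall>W\<in>QC. \<not> pstrict QL (last (hmap xs)) W"
    show "\<forall>w\<in>A. \<not> pstrict le (last xs) w"
    proof (intro ballI notI)
      fix w assume w: "w \<in> A" "pstrict le (last xs) w"
      obtain w' where cw: "covers A le (last xs) w'"
        using cover_exists[OF F P Cset_last[OF xs] w] by blast
      have xw: "xs @ [w'] \<in> CS" using sat_chain_snoc[of A le xs w'] cw xs ne by (simp add: Cset_def)
      have "QL (cls xs) (cls (xs @ [w']))" using QL_intro[OF xs xw] .
      moreover have "cls xs \<noteq> cls (xs @ [w'])" using cls_same[OF xs xw] by auto
      moreover have "cls (xs @ [w']) \<in> QC" using QC_iff xw by blast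
      ultimately show False using m lh by (auto simp: pstrict_def)
    qed
  next
    assume m: "\<forall>w\<in>A. \<not> pstrict le (last xs) w"
    show "\<forall>W\<in>QC. \<not> pstrict QL (last (hmap xs)) W"
    proof (intro ballI notI)
      fix W assume W: "W \<in> QC" "pstrict QL (last (hmap xs)) W"
      then have "QL (cls xs) W" "cls xs \<noteq> W" using lh by (auto simp: pstrict_def)
      then obtain c r where cr: "c \<in> CS" "c @ r \<in> CS" "cls xs = cls c" "W = cls (c @ r)"
        using QL_char by blast
      have rne: "r \<noteq> []"
      proof
        assume "r = []"
        then have "W = cls xs" using cr(3,4) by simp
        then show False using \<open>cls xs \<noteq> W\<close> by simp
      qed
      have cne: "c \<noteq> []" using CS_ne[OF cr(1)] .
      have S: "sat_chain A le (c @ r)" using cr(2) by (simp add: Cset_def)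
      have lt: "length c < length (c @ r)" using rne by simp
      have "pstrict le ((c @ r) ! (length c - 1)) ((c @ r) ! length c)"
        using sat_chain_lt[OF P S, of "length c - 1" "length c"] lt cne by (cases c) auto
      moreover have "(c @ r) ! (length c - 1) = last xs"
        using cls_same[OF xs cr(1) cr(3)] cne by (simp add: nth_append last_conv_nth)
      moreover have "(c @ r) ! length c \<in> A" using sat_chain_nth[OF S lt] .
      ultimately show False using m by auto
    qed
  qed
qed

lemma fh:
  assumes "sat_chain QC QL Xs" "hd Xs = Q_bottom A le z lam"
  shows "fmap Xs \<in> CS \<and> hmap (fmap Xs) = Xs \<and> length (fmap Xs) = length Xs"
  using hmap_onto[OF assms] fmap_hmap by auto

theorem main:
  assumes F: "finite A"
  shows "(\<forall>k. \<exists>f. bij_betw f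
              (sat_chains_from QC QL (Q_bottom A le z lam) k)
              (sat_chains_from A le z k) \<and>
            (\<forall>Xs \<in> sat_chains_from QC QL (Q_bottom A le z lam) k.
               word lam (f Xs) = word (Q_label lam) Xs))
       \<and> (\<exists>g. bij_betw g
              {Xs. maximal_chain QC QL Xs}
              {xs. maximal_chain A le xs} \<and>
            (\<forall>Xs. maximal_chain QC QL Xs \<longrightarrow>
               word lam (g Xs) = word (Q_label lam) Xs))"
proof (intro conjI allI)
  fix k
  let ?SQ = "sat_chains_from QC QL (Q_bottom A le z lam) k"
  let ?SP = "sat_chains_from A le z k"
  have 1: "\<forall>xs\<in>?SP. fmap (hmap xs) = xs"
    using fmap_hmap by (auto simp: sat_chains_from_def Cset_def)
  have 2: "\<forall>Xs\<in>?SQ. hmap (fmap Xs) = Xs" using fh by (auto simp: sat_chains_from_def)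
  have 3: "fmap ` ?SQ \<subseteq> ?SP" using fh by (auto simp: sat_chains_from_def Cset_def)
  have 4: "hmap ` ?SP \<subseteq> ?SQ"
  proof
    fix Xs assume "Xs \<in> hmap ` ?SP"
    then obtain xs where x: "xs \<in> ?SP" "Xs = hmap xs" by blast
    then have "xs \<in> CS" "length xs = Suc k" by (auto simp: sat_chains_from_def Cset_def)
    then show "Xs \<in> ?SQ" using hmap_sat[of xs] x by (simp add: sat_chains_from_def)
  qed
  have "bij_betw fmap ?SQ ?SP" using bij_betw_byWitness[OF 2 1 3 4] .
  moreover have "\<forall>Xs\<in>?SQ. word lam (fmap Xs) = word (Q_label lam) Xs"
  proof
    fix Xs assume "Xs \<in> ?SQ"
    then have a: "fmap Xs \<in> CS" "hmap (fmap Xs) = Xs" using fh by (auto simp: sat_chains_from_def)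
    show "word lam (fmap Xs) = word (Q_label lam) Xs" using word_hmap[OF a(1)] a(2) by simp
  qed
  ultimately show "\<exists>f. bij_betw f ?SQ ?SP \<and> (\<forall>Xs\<in>?SQ. word lam (f Xs) = word (Q_label lam) Xs)" by blast
next
  let ?MQ = "{Xs. maximal_chain QC QL Xs}"
  let ?MP = "{xs. maximal_chain A le xs}"
  have MQ: "Xs \<in> ?MQ \<longleftrightarrow> sat_chain QC QL Xs \<and> hd Xs = Q_bottom A le z lam \<and>
      (\<forall>W\<in>QC. \<not> pstrict QL (last Xs) W)" for Xs
    using max_chain_iff[OF QC_poset QC_bottom] by simp
  have MP: "xs \<in> ?MP \<longleftrightarrow> xs \<in> CS \<and> (\<forall>w\<in>A. \<not> pstrict le (last xs) w)" for xs
    using max_chain_iff[OF P bot] by (simp add: Cset_def)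
  have 1: "\<forall>xs\<in>?MP. fmap (hmap xs) = xs" using fmap_hmap MP by blast
  have 2: "\<forall>Xs\<in>?MQ. hmap (fmap Xs) = Xs" using fh MQ by blast
  have 3: "fmap ` ?MQ \<subseteq> ?MP"
  proof
    fix xs assume "xs \<in> fmap ` ?MQ"
    then obtain Xs where X: "Xs \<in> ?MQ" "xs = fmap Xs" by blast
    have a: "fmap Xs \<in> CS" "hmap (fmap Xs) = Xs" using fh X MQ by blast+
    show "xs \<in> ?MP" using max_corr[OF F a(1)] a X MQ MP by metis
  qed
  have 4: "hmap ` ?MP \<subseteq> ?MQ"
  proof
    fix Xs assume "Xs \<in> hmap ` ?MP"
    then obtain xs where x: "xs \<in> ?MP" "Xs = hmap xs" by blast
    have a: "xs \<in> CS" using x MP by blast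
    show "Xs \<in> ?MQ" using max_corr[OF F a] hmap_sat[OF a] x MQ MP by metis
  qed
  have "bij_betw fmap ?MQ ?MP" using bij_betw_byWitness[OF 2 1 3 4] .
  moreover have "\<forall>Xs. maximal_chain QC QL Xs \<longrightarrow> word lam (fmap Xs) = word (Q_label lam) Xs"
  proof (intro allI impI)
    fix Xs assume "maximal_chain QC QL Xs"
    then have a: "fmap Xs \<in> CS" "hmap (fmap Xs) = Xs" using fh MQ by auto
    show "word lam (fmap Xs) = word (Q_label lam) Xs" using word_hmap[OF a(1)] a(2) by simp
  qed
  ultimately show "\<exists>g. bij_betw g ?MQ ?MP \<and> (\<forall>Xs. maximal_chain QC QL Xs \<longrightarrow> word lam (g Xs) = word (Q_label lam) Xs)"
    by blast
qed

end


theorem proposition3p26: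
  fixes A :: "'a set" and le :: "'a \<Rightarrow> 'a \<Rightarrow> bool" and z :: 'a
    and lam :: "'a \<Rightarrow> 'a \<Rightarrow> 'l::order"
  assumes "finite A" and "is_poset A le" and "is_bottom A le z" and "graded A le"
    and "gen_EW A le z lam"
  shows "(\<forall>k. \<exists>f. bij_betw f
              (sat_chains_from (Q_carrier A le z lam) (Q_le A le z lam) (Q_bottom A le z lam) k)
              (sat_chains_from A le z k) \<and>
            (\<forall>Xs \<in> sat_chains_from (Q_carrier A le z lam) (Q_le A le z lam) (Q_bottom A le z lam) k.
               word lam (f Xs) = word (Q_label lam) Xs))
       \<and> (\<exists>g. bij_betw g
              {Xs. maximal_chain (Q_carrier A le z lam) (Q_le A le z lam) Xs}
              {xs. maximal_chain A le xs} \<and>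
            (\<forall>Xs. maximal_chain (Q_carrier A le z lam) (Q_le A le z lam) Xs \<longrightarrow>
               word lam (g Xs) = word (Q_label lam) Xs))"
proof -
  interpret EWL A le z lam
    using assms(2,3,5) by unfold_locales (auto simp: gen_EW_def)
  show ?thesis using main[OF assms(1)] by simp
qed

end
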